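(* If $X$ is a crowded (Hausdorff) $\sigma$-space, then $dis(X)=dis^*(X)$.
   Context: All spaces are Hausdorff. A space is crowded if it has no isolated points. A network for $X$ is a family $\mathcal{N}$ of subsets of $X$ such that for every open $U\subseteq X$ and $x\in U$ there is $N\in\mathcal{N}$ with $x\in N\subseteq U$. A $\sigma$-space is a space having a $\sigma$-discrete network. $dis(X)$ is the least number of discrete subspaces needed to cover $X$, and $dis^*(X)$ is the least number of closed discrete subsets needed to cover $X$. *)

theory Defs
  imports "HOL-Analysis.Analysis"
begin

definition crowded :: "'a topology \<Rightarrow> bool" where
  "crowded X \<longleftrightarrow> (\<forall>x\<in>topspace X. \<not> openin X {x})"

definition discrete_subspace :: "'a topology \<Rightarrow> 'a set \<Rightarrow> bool" where
  "discrete_subspace X D \<longleftrightarrow> D \<subseteq> topspace X \<and> subtopology X D = discrete_topology D"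

definition network :: "'a topology \<Rightarrow> 'a set set \<Rightarrow> bool" where
  "network X \<N> \<longleftrightarrow> (\<forall>N\<in>\<N>. N \<subseteq> topspace X) \<and>
     (\<forall>U x. openin X U \<and> x \<in> U \<longrightarrow> (\<exists>N\<in>\<N>. x \<in> N \<and> N \<subseteq> U))"

definition discrete_family :: "'a topology \<Rightarrow> 'a set set \<Rightarrow> bool" where
  "discrete_family X \<A> \<longleftrightarrow> (\<forall>x\<in>topspace X. \<exists>U. openin X U \<and> x \<in> U \<and>
     (\<forall>A\<in>\<A>. \<forall>B\<in>\<A>. A \<inter> U \<noteq> {} \<and> B \<inter> U \<noteq> {} \<longrightarrow> A = B))"

definition sigma_discrete :: "'a topology \<Rightarrow> 'a set set \<Rightarrow> bool" where
  "sigma_discrete X \<N> \<longleftrightarrow> (\<exists>F :: nat \<Rightarrow> 'a set set. \<N> = (\<Union>n. F n) \<and> (\<forall>n. discrete_family X (F n)))"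

definition sigma_space :: "'a topology \<Rightarrow> bool" where
  "sigma_space X \<longleftrightarrow> (\<exists>\<N>. network X \<N> \<and> sigma_discrete X \<N>)"

definition dis_cover :: "'a topology \<Rightarrow> 'a set set \<Rightarrow> bool" where
  "dis_cover X \<F> \<longleftrightarrow> (\<forall>D\<in>\<F>. discrete_subspace X D) \<and> \<Union>\<F> = topspace X"

definition dis_star_cover :: "'a topology \<Rightarrow> 'a set set \<Rightarrow> bool" where
  "dis_star_cover X \<F> \<longleftrightarrow> (\<forall>D\<in>\<F>. closedin X D \<and> discrete_subspace X D) \<and> \<Union>\<F> = topspace X"

(* dis(X), dis*(X): the cardinality of a cover of minimal cardinality
   (represented as the cardinal order relation card_of of such a cover) *)
definition dis :: "'a topology \<Rightarrow> 'a set rel" where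
  "dis X = card_of (SOME \<F>. dis_cover X \<F> \<and>
      (\<forall>\<G>. dis_cover X \<G> \<longrightarrow> (card_of \<F>, card_of \<G>) \<in> ordLeq))"

definition dis_star :: "'a topology \<Rightarrow> 'a set rel" where
  "dis_star X = card_of (SOME \<F>. dis_star_cover X \<F> \<and>
      (\<forall>\<G>. dis_star_cover X \<G> \<longrightarrow> (card_of \<F>, card_of \<G>) \<in> ordLeq))"

end

theory Submission
  imports Defs
begin

notation card_of (\<open>|_|\<close>)


lemma min_exists:
  fixes P :: "'b set \<Rightarrow> bool"
  assumes "P G0"
  shows "\<exists>F. P F \<and> (\<forall>G. P G \<longrightarrow> ( |F|, |G| ) \<in> ordLeq)"
proof -
  let ?Q = "{|G| | G. P G}"
  have "|G0| \<in> ?Q" using assms by blast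
  from wfE_min[OF wf_ordLess this]
  obtain R where R: "R \<in> ?Q" and m: "\<And>y. (y, R) \<in> ordLess \<Longrightarrow> y \<notin> ?Q"
    by blast
  then obtain F where F: "P F" "R = |F|" by blast
  have "( |F|, |G| ) \<in> ordLeq" if "P G" for G
  proof -
    have "( |G|, |F| ) \<notin> ordLess" using m F that by blast
    thus ?thesis using not_ordLess_iff_ordLeq card_of_Well_order by blast
  qed
  thus ?thesis using F by blast
qed

lemma discrete_subspace_iff:
  "discrete_subspace X D \<longleftrightarrow> D \<subseteq> topspace X \<and> (\<forall>d\<in>D. \<exists>U. openin X U \<and> U \<inter> D = {d})"
proof -
  have 1: "subtopology X D = discrete_topology D \<longleftrightarrow> topspace (subtopology X D) = D \<and> (\<forall>x\<in>D. openin (subtopology X D) {x})"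
    by (subst eq_commute) (rule discrete_topology_unique)
  have 2: "topspace (subtopology X D) = D \<longleftrightarrow> D \<subseteq> topspace X" by auto
  have 3: "openin (subtopology X D) {x} \<longleftrightarrow> (\<exists>U. openin X U \<and> U \<inter> D = {x})" for x
    unfolding openin_subtopology by (auto simp: eq_commute)
  show ?thesis unfolding discrete_subspace_def 1 2 3 by blast
qed

lemma sep_discrete:
  assumes S: "S \<subseteq> topspace X"
    and P: "\<And>x. x \<in> topspace X \<Longrightarrow> \<exists>U. openin X U \<and> x \<in> U \<and> (\<forall>d\<in>S. \<forall>e\<in>S. d \<in> U \<and> e \<in> U \<longrightarrow> d = e)"
  shows "discrete_subspace X S"
  unfolding discrete_subspace_iff
proof (intro conjI S ballI)
  fix d assume d: "d \<in> S"
  have dt: "d \<in> topspace X" using d S by blast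
  then obtain U where U: "openin X U" "d \<in> U" "\<forall>a\<in>S. \<forall>e\<in>S. a \<in> U \<and> e \<in> U \<longrightarrow> a = e"
    using P by blast
  have "U \<inter> S = {d}"
  proof
    show "U \<inter> S \<subseteq> {d}" using U(3) d U(2) by blast
    show "{d} \<subseteq> U \<inter> S" using U(2) d by blast
  qed
  thus "\<exists>U. openin X U \<and> U \<inter> S = {d}" using U(1) by blast
qed

lemma sep_closed:
  assumes t1: "t1_space X" and S: "S \<subseteq> topspace X"
    and P: "\<And>x. x \<in> topspace X \<Longrightarrow> \<exists>U. openin X U \<and> x \<in> U \<and> (\<forall>d\<in>S. \<forall>e\<in>S. d \<in> U \<and> e \<in> U \<longrightarrow> d = e)"
  shows "closedin X S"
proof -
  have "openin X (topspace X - S)"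
  proof (subst openin_subopen, intro ballI)
    fix x assume x: "x \<in> topspace X - S"
    then obtain U where U: "openin X U" "x \<in> U" "\<forall>d\<in>S. \<forall>e\<in>S. d \<in> U \<and> e \<in> U \<longrightarrow> d = e"
      using P by blast
    have Ut: "U \<subseteq> topspace X" using openin_subset[OF U(1)] .
    show "\<exists>T. openin X T \<and> x \<in> T \<and> T \<subseteq> topspace X - S"
    proof (cases "\<exists>e\<in>S. e \<in> U")
      case True
      then obtain e where e: "e \<in> S" "e \<in> U" by blast
      have "closedin X {e}" using closedin_t1_singleton[OF t1] e S by blast
      hence o: "openin X (U - {e})" using U(1) by (simp add: openin_diff)
      have "\<And>y. y \<in> U \<Longrightarrow> y \<in> S \<Longrightarrow> y = e" using U(3) e by blast
      hence "U - {e} \<subseteq> topspace X - S" using Ut by blast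
      moreover have "x \<in> U - {e}" using x e U(2) by blast
      ultimately show ?thesis using o by blast
    next
      case False
      thus ?thesis using U Ut by blast
    qed
  qed
  thus ?thesis using S unfolding closedin_def by blast
qed

lemma finite_discrete_cover:
  assumes H: "Hausdorff_space X" and c: "crowded X" and fin: "finite A"
  shows "(\<forall>D\<in>A. discrete_subspace X D) \<Longrightarrow> openin X U \<Longrightarrow> U \<noteq> {} \<Longrightarrow> U \<subseteq> \<Union>A \<Longrightarrow> False"
  using fin
proof (induction A arbitrary: U rule: finite_induct)
  case empty thus ?case by auto
next
  case (insert D A)
  have dA: "\<forall>D\<in>A. discrete_subspace X D" using insert.prems(1) by simp
  have dD: "discrete_subspace X D" using insert.prems(1) by simp
  have oU: "openin X U" by (rule insert.prems(2))
  show ?case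
  proof (cases "U \<inter> D = {}")
    case True
    hence "U \<subseteq> \<Union>A" using insert.prems(4) by auto
    thus False using insert.IH[OF dA oU insert.prems(3)] by simp
  next
    case False
    then obtain d where d: "d \<in> U" "d \<in> D" by blast
    obtain V where V: "openin X V" "V \<inter> D = {d}"
      using dD d unfolding discrete_subspace_iff by blast
    have dt: "d \<in> topspace X" using d(1) openin_subset[OF oU] by blast
    have cd: "closedin X {d}"
      using closedin_t1_singleton[OF Hausdorff_imp_t1_space[OF H] dt] .
    have oUV: "openin X (U \<inter> V)" using oU V(1) by (rule openin_Int)
    have o: "openin X (U \<inter> V - {d})" using oUV cd by (rule openin_diff)
    have "\<not> openin X {d}" using c dt unfolding crowded_def by blast
    hence "U \<inter> V \<noteq> {d}" using oUV by metis
    moreover have "d \<in> U \<inter> V" using d V by blast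
    ultimately have ne: "U \<inter> V - {d} \<noteq> {}" by blast
    have "U \<inter> V - {d} \<subseteq> \<Union>A" using insert.prems(4) V(2) by blast
    thus False using insert.IH[OF dA o ne] by simp
  qed
qed


lemma star_imp_cover: "dis_star_cover X G \<Longrightarrow> dis_cover X G"
  unfolding dis_star_cover_def dis_cover_def by blast

lemma sing_cover:
  assumes t1: "t1_space X"
  shows "dis_star_cover X ((\<lambda>x. {x}) ` topspace X)"
proof -
  have "closedin X D \<and> discrete_subspace X D" if Din: "D \<in> (\<lambda>x. {x}) ` topspace X" for D
  proof -
    obtain x where x: "x \<in> topspace X" "D = {x}" using Din by blast
    have "closedin X {x}" using closedin_t1_singleton[OF t1 x(1)] .
    moreover have "discrete_subspace X {x}"
      unfolding discrete_subspace_iff using x(1) openin_topspace[of X] by blast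
    ultimately show ?thesis using x(2) by simp
  qed
  moreover have "\<Union>((\<lambda>x. {x}) ` topspace X) = topspace X" by blast
  ultimately show ?thesis unfolding dis_star_cover_def by blast
qed

theorem mainTheorem4:
  fixes X :: "'a topology"
  assumes "Hausdorff_space X" and "crowded X" and "sigma_space X"
  shows "(dis X, dis_star X) \<in> ordIso"
proof -
  have t1: "t1_space X" using assms(1) Hausdorff_imp_t1_space by blast
  have sing_star: "dis_star_cover X ((\<lambda>x. {x}) ` topspace X)" by (rule sing_cover[OF t1])
  have sing_dis: "dis_cover X ((\<lambda>x. {x}) ` topspace X)" by (rule star_imp_cover[OF sing_star])
  define A where "A = (SOME \<F>. dis_cover X \<F> \<and>
      (\<forall>\<G>. dis_cover X \<G> \<longrightarrow> (card_of \<F>, card_of \<G>) \<in> ordLeq))"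
  define B where "B = (SOME \<F>. dis_star_cover X \<F> \<and>
      (\<forall>\<G>. dis_star_cover X \<G> \<longrightarrow> (card_of \<F>, card_of \<G>) \<in> ordLeq))"
  have A: "dis_cover X A \<and> (\<forall>\<G>. dis_cover X \<G> \<longrightarrow> (card_of A, card_of \<G>) \<in> ordLeq)"
    unfolding A_def by (rule someI_ex[OF min_exists[of "dis_cover X", OF sing_dis]])
  have B: "dis_star_cover X B \<and> (\<forall>\<G>. dis_star_cover X \<G> \<longrightarrow> (card_of B, card_of \<G>) \<in> ordLeq)"
    unfolding B_def by (rule someI_ex[OF min_exists[of "dis_star_cover X", OF sing_star]])
  have AB: "((card_of (A)), (card_of (B))) \<in> ordLeq"
    using A star_imp_cover[OF B[THEN conjunct1]] by blast
  have BA: "((card_of (B)), (card_of (A))) \<in> ordLeq"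
  proof (cases "topspace X = {}")
    case True
    have "dis_star_cover X {}" using True unfolding dis_star_cover_def by simp
    hence "((card_of (B)), (card_of ({}::'a set set))) \<in> ordLeq" using B by blast
    thus ?thesis using card_of_empty ordLeq_transitive by metis
  next
    case ne: False
    have infA: "\<not> finite A"
    proof
      assume fA: "finite A"
      have dA: "\<forall>D\<in>A. discrete_subspace X D" and uA: "\<Union>A = topspace X"
        using A unfolding dis_cover_def by blast+
      show False using finite_discrete_cover[OF assms(1,2) fA dA openin_topspace ne] uA by blast
    qed
    obtain \<N> where N: "network X \<N>" "sigma_discrete X \<N>"
      using assms(3) unfolding sigma_space_def by blast
    obtain F :: "nat \<Rightarrow> 'a set set" where F: "\<N> = (\<Union>n. F n)" "\<And>n. discrete_family X (F n)"
      using N(2) unfolding sigma_discrete_def by blast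
    define S where "S = (\<lambda>(D, n). {d \<in> D. \<exists>M\<in>F n. d \<in> M \<and> M \<inter> D = {d}})"
    define C where "C = S ` (A \<times> (UNIV :: nat set))"
    have Cdisc: "closedin X (S (D, n)) \<and> discrete_subspace X (S (D, n))" if D: "D \<in> A" for D n
    proof -
     have St: "S (D, n) \<subseteq> topspace X"
     proof -
      have "D \<subseteq> topspace X" using A D unfolding dis_cover_def by blast
      thus "S (D, n) \<subseteq> topspace X" unfolding S_def by auto
     qed
     have Px: "\<exists>U. openin X U \<and> x \<in> U \<and> (\<forall>d\<in>S (D, n). \<forall>e\<in>S (D, n). d \<in> U \<and> e \<in> U \<longrightarrow> d = e)" if x: "x \<in> topspace X" for x
     proof -
      obtain U where U: "openin X U" "x \<in> U"
        "\<forall>P\<in>F n. \<forall>Q\<in>F n. P \<inter> U \<noteq> {} \<and> Q \<inter> U \<noteq> {} \<longrightarrow> P = Q"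
      proof -
        have "\<forall>x\<in>topspace X. \<exists>U. openin X U \<and> x \<in> U \<and>
           (\<forall>A\<in>F n. \<forall>B\<in>F n. A \<inter> U \<noteq> {} \<and> B \<inter> U \<noteq> {} \<longrightarrow> A = B)"
          using F(2)[of n] unfolding discrete_family_def .
        hence "\<exists>U. openin X U \<and> x \<in> U \<and>
           (\<forall>A\<in>F n. \<forall>B\<in>F n. A \<inter> U \<noteq> {} \<and> B \<inter> U \<noteq> {} \<longrightarrow> A = B)"
          using x by (rule bspec)
        thus ?thesis using that by blast
      qed
      have "\<forall>d\<in>S (D, n). \<forall>e\<in>S (D, n). d \<in> U \<and> e \<in> U \<longrightarrow> d = e"
      proof (intro ballI impI)
        fix d e assume d: "d \<in> S (D, n)" and e: "e \<in> S (D, n)" and de: "d \<in> U \<and> e \<in> U"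
        have "\<exists>M\<in>F n. d \<in> M \<and> M \<inter> D = {d}" using d by (simp add: S_def)
        then obtain P where P: "P \<in> F n" "d \<in> P" "P \<inter> D = {d}" by blast
        have "\<exists>M\<in>F n. e \<in> M \<and> M \<inter> D = {e}" using e by (simp add: S_def)
        then obtain Q where Q: "Q \<in> F n" "e \<in> Q" "Q \<inter> D = {e}" by blast
        have "P \<inter> U \<noteq> {}" using P(2) de by blast
        moreover have "Q \<inter> U \<noteq> {}" using Q(2) de by blast
        ultimately have "P = Q" using U(3) P(1) Q(1) by blast
        hence "{d} = {e}" using P(3) Q(3) by simp
        thus "d = e" by simp
      qed
      thus "\<exists>U. openin X U \<and> x \<in> U \<and> (\<forall>d\<in>S (D, n). \<forall>e\<in>S (D, n). d \<in> U \<and> e \<in> U \<longrightarrow> d = e)"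
        using U by blast
     qed
     show ?thesis using sep_closed[OF t1 St Px] sep_discrete[OF St Px] by blast
    qed
    have Dun: "D \<subseteq> (\<Union>n. S (D, n))" if D: "D \<in> A" for D
    proof
      fix d assume d: "d \<in> D"
      have "discrete_subspace X D" using A D unfolding dis_cover_def by blast
      hence "\<forall>d\<in>D. \<exists>U. openin X U \<and> U \<inter> D = {d}" unfolding discrete_subspace_iff by blast
      then obtain U where U: "openin X U" "U \<inter> D = {d}" using d by blast
      have dU: "d \<in> U" using U(2) by blast
      have "\<forall>U x. openin X U \<and> x \<in> U \<longrightarrow> (\<exists>N\<in>\<N>. x \<in> N \<and> N \<subseteq> U)"
        using N(1) unfolding network_def by blast
      then obtain M where M: "M \<in> \<N>" "d \<in> M" "M \<subseteq> U"
        using U(1) dU by blast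
      obtain n where n: "M \<in> F n" using M F(1) by blast
      have "M \<inter> D = {d}" using M U d by blast
      hence "d \<in> S (D, n)" using n M d unfolding S_def by auto
      thus "d \<in> (\<Union>n. S (D, n))" by blast
    qed
    have SsubD: "S (D, n) \<subseteq> D" for D n unfolding S_def by auto
    have Atop: "D \<subseteq> topspace X" if DA: "D \<in> A" for D using A DA unfolding dis_cover_def by blast
    have "\<Union>C = topspace X"
    proof
      show "\<Union>C \<subseteq> topspace X"
      proof
        fix x assume "x \<in> \<Union>C"
        then obtain D n where "D \<in> A" "x \<in> S (D, n)" unfolding C_def by auto
        thus "x \<in> topspace X" using SsubD Atop by blast
      qed
      show "topspace X \<subseteq> \<Union>C"
      proof
        fix x assume "x \<in> topspace X"
        then obtain D where "D \<in> A" "x \<in> D" using A unfolding dis_cover_def by blast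
        then obtain n where "x \<in> S (D, n)" using Dun by blast
        thus "x \<in> \<Union>C" unfolding C_def using \<open>D \<in> A\<close> by blast
      qed
    qed
    moreover have "\<forall>E\<in>C. closedin X E \<and> discrete_subspace X E"
    proof
      fix E assume "E \<in> C"
      then obtain D n where "D \<in> A" "E = S (D, n)" unfolding C_def by auto
      thus "closedin X E \<and> discrete_subspace X E" using Cdisc by blast
    qed
    ultimately have Cst: "dis_star_cover X C" unfolding dis_star_cover_def by blast
    have "((card_of (C)), (card_of (A \<times> (UNIV :: nat set)))) \<in> ordLeq" unfolding C_def by (rule card_of_image)
    moreover have "((card_of (A \<times> (UNIV :: nat set))), (card_of (A))) \<in> ordIso"
      using card_of_Times_infinite_simps(1)[OF infA] infA infinite_iff_card_of_nat by blast
    ultimately have "((card_of (C)), (card_of (A))) \<in> ordLeq" using ordLeq_ordIso_trans by blast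
    moreover have "((card_of B), (card_of C)) \<in> ordLeq" using B Cst by blast
    ultimately show ?thesis using ordLeq_transitive by metis
  qed
  have "((card_of (A)), (card_of (B))) \<in> ordIso" using AB BA ordIso_iff_ordLeq by blast
  thus ?thesis unfolding dis_def dis_star_def A_def B_def .
qed

end
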